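(* Let $R$ be a nonzero commutative ring and $n\ge2$. Then $R$ has no zero divisors if and only if for all sets $\mathscr{R},\mathscr{S}$ of $R$-weighted complete graphs on $n$ vertices, $\mathscr R*\mathscr S=\{0\}$ implies $\mathscr R=\{0\}$ or $\mathscr S=\{0\}$, where $0$ denotes the graph with all weights $0$ (on the relevant vertex set).
   Context: An $R$-weighted complete graph $K$ is a finite vertex set with a weight $v_K(e)\in R$ on every 2-subset $e$. For such $H,G$ with equal vertex counts and a bijection $f:V(H)\to V(G)$, $H*_fG$ has vertex set $V(H)$ and weights $v_H(\{x,y\})\cdot v_G(\{f(x),f(y)\})$; $H*G=\{H*_fG: f \text{ bijection}\}$, and for sets $\mathscr H*\mathscr G=\bigcup_{H\in\mathscr H,G\in\mathscr G}H*G$. *)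

theory Defs
  imports Main
begin

text \<open>Vertex set is fixed to {..<n}
  (every n-vertex graph is isomorphic to one on this vertex set). A graph is
  represented by its weight function on subsets of nat; weights are only
  meaningful on 2-subsets of {..<n} and are required to be 0 elsewhere,
  so that equality of graphs is equality of weight functions.\<close>

definition edges :: "nat \<Rightarrow> nat set set" where
  "edges n = {e. e \<subseteq> {..<n} \<and> card e = 2}"

definition wgraphs :: "nat \<Rightarrow> (nat set \<Rightarrow> 'a::zero) set" where
  "wgraphs n = {w. \<forall>e. e \<notin> edges n \<longrightarrow> w e = 0}"

definition zero_graph :: "nat set \<Rightarrow> 'a::zero" where
  "zero_graph = (\<lambda>_. 0)"

definition gstar_f :: "nat \<Rightarrow> (nat set \<Rightarrow> 'a::mult_zero) \<Rightarrow> (nat set \<Rightarrow> 'a)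
    \<Rightarrow> (nat \<Rightarrow> nat) \<Rightarrow> (nat set \<Rightarrow> 'a)" where
  "gstar_f n H G f = (\<lambda>e. if e \<in> edges n then H e * G (f ` e) else 0)"

definition gstar :: "nat \<Rightarrow> (nat set \<Rightarrow> 'a::mult_zero) set \<Rightarrow> (nat set \<Rightarrow> 'a) set
    \<Rightarrow> (nat set \<Rightarrow> 'a) set" where
  "gstar n RR SS = {gstar_f n H G f | H G f.
      H \<in> RR \<and> G \<in> SS \<and> bij_betw f {..<n} {..<n}}"

end

theory Submission
  imports Defs
begin

lemma edge_img: assumes "bij_betw f {..<n} {..<n}" "e \<in> edges n"
  shows "f ` e \<in> edges n"
proof -
  have "e \<subseteq> {..<n}" "card e = 2" using assms(2) by (auto simp: edges_def)
  moreover have "inj_on f e" using assms(1) \<open>e \<subseteq> {..<n}\<close>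
    by (meson bij_betw_def inj_on_subset)
  ultimately show ?thesis using assms(1) by (auto simp: edges_def card_image bij_betw_def)
qed

lemma perm_exists: assumes "e \<in> edges n" "e' \<in> edges n"
  shows "\<exists>f. bij_betw f {..<n} {..<n} \<and> f ` e = e'"
proof -
  have s: "e \<subseteq> {..<n}" "card e = 2" "e' \<subseteq> {..<n}" "card e' = 2"
    using assms by (auto simp: edges_def)
  have fe: "finite e" "finite e'" using s finite_subset by blast+
  obtain h1 where h1: "bij_betw h1 e e'" using finite_same_card_bij[OF fe] s by auto
  have "card ({..<n} - e) = card ({..<n} - e')"
    using s fe by (simp add: card_Diff_subset)
  then obtain h2 where h2: "bij_betw h2 ({..<n} - e) ({..<n} - e')"
    using finite_same_card_bij by blast
  define f where "f = (\<lambda>x. if x \<in> e then h1 x else h2 x)"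
  have b1: "bij_betw f e e'" using h1 by (rule bij_betw_cong[THEN iffD1, rotated]) (simp add: f_def)
  have b2: "bij_betw f ({..<n} - e) ({..<n} - e')"
    using h2 by (rule bij_betw_cong[THEN iffD1, rotated]) (simp add: f_def)
  have "bij_betw f (e \<union> ({..<n} - e)) (e' \<union> ({..<n} - e'))"
    by (rule bij_betw_combine[OF b1 b2]) auto
  moreover have "e \<union> ({..<n} - e) = {..<n}" "e' \<union> ({..<n} - e') = {..<n}" using s by auto
  ultimately show ?thesis using b1 by (metis bij_betw_imp_surj_on)
qed

theorem mainTheorem14:
  fixes n :: nat
  assumes "(0::'a::comm_ring_1) \<noteq> 1" and "n \<ge> 2"
  shows "(\<forall>a b :: 'a. a * b = 0 \<longrightarrow> a = 0 \<or> b = 0) \<longleftrightarrow>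
    (\<forall>RR SS :: (nat set \<Rightarrow> 'a) set.
       RR \<subseteq> wgraphs n \<longrightarrow> SS \<subseteq> wgraphs n \<longrightarrow>
       gstar n RR SS = {zero_graph} \<longrightarrow> RR = {zero_graph} \<or> SS = {zero_graph})"
proof
  assume nz: "\<forall>a b :: 'a. a * b = 0 \<longrightarrow> a = 0 \<or> b = 0"
  show "\<forall>RR SS :: (nat set \<Rightarrow> 'a) set.
       RR \<subseteq> wgraphs n \<longrightarrow> SS \<subseteq> wgraphs n \<longrightarrow>
       gstar n RR SS = {zero_graph} \<longrightarrow> RR = {zero_graph} \<or> SS = {zero_graph}"
  proof (intro allI impI)
    fix RR SS :: "(nat set \<Rightarrow> 'a) set"
    assume R: "RR \<subseteq> wgraphs n" and S: "SS \<subseteq> wgraphs n" and g: "gstar n RR SS = {zero_graph}"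
    have prod0: "H e * G (f ` e) = 0" if "H \<in> RR" "G \<in> SS" "bij_betw f {..<n} {..<n}" "e \<in> edges n"
      for H G f e
    proof -
      have "gstar_f n H G f \<in> gstar n RR SS" using that unfolding gstar_def by blast
      hence "gstar_f n H G f = zero_graph" using g by auto
      hence "gstar_f n H G f e = 0" by (simp add: zero_graph_def)
      thus ?thesis using that(4) by (simp add: gstar_f_def)
    qed
    have ne: "RR \<noteq> {}" "SS \<noteq> {}" using g unfolding gstar_def by auto
    show "RR = {zero_graph} \<or> SS = {zero_graph}"
    proof (rule ccontr)
      assume "\<not> ?thesis"
      then obtain H G where H: "H \<in> RR" "H \<noteq> zero_graph" and G: "G \<in> SS" "G \<noteq> zero_graph"
        using ne by blast
      obtain e where e: "H e \<noteq> 0" using H(2) by (auto simp: zero_graph_def)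
      obtain e' where e': "G e' \<noteq> 0" using G(2) by (auto simp: zero_graph_def)
      have ee: "e \<in> edges n" using e H(1) R by (auto simp: wgraphs_def)
      have ee': "e' \<in> edges n" using e' G(1) S by (auto simp: wgraphs_def)
      obtain f where f: "bij_betw f {..<n} {..<n}" "f ` e = e'" using perm_exists[OF ee ee'] by blast
      have "H e * G e' = 0" using prod0[OF H(1) G(1) f(1) ee] f(2) by simp
      thus False using nz e e' by blast
    qed
  qed
next
  assume A: "\<forall>RR SS :: (nat set \<Rightarrow> 'a) set.
       RR \<subseteq> wgraphs n \<longrightarrow> SS \<subseteq> wgraphs n \<longrightarrow>
       gstar n RR SS = {zero_graph} \<longrightarrow> RR = {zero_graph} \<or> SS = {zero_graph}"
  show "\<forall>a b :: 'a. a * b = 0 \<longrightarrow> a = 0 \<or> b = 0"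
  proof (intro allI impI)
    fix a b :: 'a assume ab: "a * b = 0"
    define H where "H = (\<lambda>e. if e \<in> edges n then a else 0)"
    define G where "G = (\<lambda>e. if e \<in> edges n then b else 0)"
    have w: "{H} \<subseteq> wgraphs n" "{G} \<subseteq> wgraphs n" by (auto simp: wgraphs_def H_def G_def)
    have "gstar n {H} {G} = {zero_graph}"
    proof
      show "gstar n {H} {G} \<subseteq> {zero_graph}"
        unfolding gstar_def
        by (auto simp: gstar_f_def zero_graph_def H_def G_def ab edge_img)
      have "bij_betw id {..<n} {..<(n::nat)}" by simp
      moreover have "gstar_f n H G id = zero_graph"
        by (auto simp: gstar_f_def zero_graph_def H_def G_def ab)
      ultimately show "{zero_graph} \<subseteq> gstar n {H} {G}" unfolding gstar_def
        by (metis (mono_tags, lifting) empty_subsetI insert_subset mem_Collect_eq singletonI)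
    qed
    hence "{H} = {zero_graph} \<or> {G} = {zero_graph}" using A w by blast
    moreover have "{0,1} \<in> edges n" using assms(2) by (auto simp: edges_def)
    ultimately show "a = 0 \<or> b = 0"
      by (auto simp: H_def G_def zero_graph_def fun_eq_iff split: if_splits)
  qed
qed

end
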